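(* Let $\mathbb S[\boldsymbol\kappa]$ be a Hurwitz-stable Child-Selection matrix that contains an unstable-positive feedback as a principal submatrix. Then $\mathbb S[\boldsymbol\kappa]$ is $D$-Hopf.
   Context: For a reaction network with reactant coefficients $s^j_m$ and stoichiometric matrix $\mathbb S$, a $k$-Child-Selection $\boldsymbol\kappa=(\kappa,E_\kappa,J)$ is a bijection $J:\kappa\to E_\kappa$ between $k$ species and $k$ reactions with $s^{J(m)}_m>0$; its CS-matrix is $\mathbb S[\boldsymbol\kappa]_{ml}=\mathbb S_{m,J(l)}$. Hurwitz-stable: all eigenvalues have negative real part; Hurwitz-unstable: some eigenvalue has positive real part. An unstable core is a Hurwitz-unstable CS-matrix with no Hurwitz-unstable proper principal submatrix; a $k\times k$ unstable core is an unstable-positive feedback if $\operatorname{sign}\det=(-1)^{k-1}$ and an unstable-negative feedback if $\operatorname{sign}\det=(-1)^k$. Inertia: numbers of eigenvalues with negative, positive, zero real part. $A$ is $D$-Hopf if there exist an invertible principal submatrix $A[\kappa]$ and positive diagonal $D_1,D_2$ with $\operatorname{inertia}(A[\kappa]D_1)\ne\operatorname{inertia}(A[\kappa]D_2)$. *)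

theory Defs
  imports "Jordan_Normal_Form.Char_Poly" "HOL-Computational_Algebra.Polynomial"
begin

text \<open>Matrices indexed by a finite set of natural numbers I (principal submatrices are
restrictions to subsets).\<close>

definition cmat :: "nat set \<Rightarrow> (nat \<Rightarrow> nat \<Rightarrow> real) \<Rightarrow> complex mat" where
  "cmat I A = mat (card I) (card I)
     (\<lambda>(a, b). complex_of_real (A (sorted_list_of_set I ! a) (sorted_list_of_set I ! b)))"

definition rmat :: "nat set \<Rightarrow> (nat \<Rightarrow> nat \<Rightarrow> real) \<Rightarrow> real mat" where
  "rmat I A = mat (card I) (card I)
     (\<lambda>(a, b). A (sorted_list_of_set I ! a) (sorted_list_of_set I ! b))"

definition hurwitz_stable :: "nat set \<Rightarrow> (nat \<Rightarrow> nat \<Rightarrow> real) \<Rightarrow> bool" where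
  "hurwitz_stable I A \<longleftrightarrow> (\<forall>z. eigenvalue (cmat I A) z \<longrightarrow> Re z < 0)"

definition hurwitz_unstable :: "nat set \<Rightarrow> (nat \<Rightarrow> nat \<Rightarrow> real) \<Rightarrow> bool" where
  "hurwitz_unstable I A \<longleftrightarrow> (\<exists>z. eigenvalue (cmat I A) z \<and> Re z > 0)"

definition inertia :: "nat set \<Rightarrow> (nat \<Rightarrow> nat \<Rightarrow> real) \<Rightarrow> nat \<times> nat \<times> nat" where
  "inertia I A = (let p = char_poly (cmat I A) in
     ((\<Sum>z\<in>{z. poly p z = 0 \<and> Re z < 0}. order z p),
      (\<Sum>z\<in>{z. poly p z = 0 \<and> Re z > 0}. order z p),
      (\<Sum>z\<in>{z. poly p z = 0 \<and> Re z = 0}. order z p)))"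

text \<open>Reaction network: species {..<n}, reactions {..<r}, reactant coefficients
s j m = s^j_m (reaction j, species m), stoichiometric matrix S m j.
A child selection (kappa, E_kappa, J).\<close>

definition child_selection ::
  "nat \<Rightarrow> nat \<Rightarrow> (nat \<Rightarrow> nat \<Rightarrow> real) \<Rightarrow> nat set \<Rightarrow> nat set \<Rightarrow> (nat \<Rightarrow> nat) \<Rightarrow> bool" where
  "child_selection n r s \<kappa> E\<kappa> J \<longleftrightarrow>
     \<kappa> \<subseteq> {..<n} \<and> E\<kappa> \<subseteq> {..<r} \<and> bij_betw J \<kappa> E\<kappa> \<and> (\<forall>m\<in>\<kappa>. s (J m) m > 0)"

definition cs_matrix :: "(nat \<Rightarrow> nat \<Rightarrow> real) \<Rightarrow> (nat \<Rightarrow> nat) \<Rightarrow> nat \<Rightarrow> nat \<Rightarrow> real" where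
  "cs_matrix S J = (\<lambda>m l. S m (J l))"

definition unstable_core :: "nat set \<Rightarrow> (nat \<Rightarrow> nat \<Rightarrow> real) \<Rightarrow> bool" where
  "unstable_core I A \<longleftrightarrow> hurwitz_unstable I A \<and> (\<forall>I'. I' \<subset> I \<longrightarrow> \<not> hurwitz_unstable I' A)"

definition unstable_positive_feedback :: "nat set \<Rightarrow> (nat \<Rightarrow> nat \<Rightarrow> real) \<Rightarrow> bool" where
  "unstable_positive_feedback I A \<longleftrightarrow>
     unstable_core I A \<and> sgn (det (rmat I A)) = (-1) ^ (card I - 1)"

definition D_Hopf :: "nat set \<Rightarrow> (nat \<Rightarrow> nat \<Rightarrow> real) \<Rightarrow> bool" where
  "D_Hopf I A \<longleftrightarrow> (\<exists>K \<subseteq> I. det (rmat K A) \<noteq> 0 \<and>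
     (\<exists>D1 D2 :: nat \<Rightarrow> real. (\<forall>i\<in>K. D1 i > 0) \<and> (\<forall>i\<in>K. D2 i > 0) \<and>
        inertia K (\<lambda>i j. A i j * D1 j) \<noteq> inertia K (\<lambda>i j. A i j * D2 j)))"

end

theory Submission
  imports Defs
begin


lemma remove1_nth:
  assumes "distinct xs" "a < length xs" "xs ! a = x" "i < length xs - 1"
  shows "remove1 x xs ! i = xs ! (if i < a then i else Suc i)"
  using assms
proof (induction xs arbitrary: a i)
  case Nil then show ?case by simp
next
  case (Cons y ys)
  show ?case
  proof (cases a)
    case 0
    then have "y = x" using Cons.prems by simp
    then show ?thesis using Cons.prems \<open>a = 0\<close> by (simp add: nth_Cons')
  next
    case (Suc a')
    then have yx: "y \<noteq> x" using Cons.prems by (auto simp: nth_mem)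
    show ?thesis
    proof (cases i)
      case 0 then show ?thesis using Suc yx by (simp add: nth_Cons')
    next
      case (Suc i')
      have "remove1 x ys ! i' = ys ! (if i' < a' then i' else Suc i')"
        using Cons.IH[of a' i'] Cons.prems \<open>a = Suc a'\<close> Suc by simp
      then show ?thesis using yx Suc \<open>a = Suc a'\<close> by simp
    qed
  qed
qed

lemma rmat_carrier: "rmat I f \<in> carrier_mat (card I) (card I)"
  unfolding rmat_def by simp

lemma rmat_delete:
  assumes fin: "finite I" and x: "x \<in> I" and a: "a < card I" "sorted_list_of_set I ! a = x"
  shows "mat_delete (rmat I f) a a = rmat (I - {x}) f"
proof -
  let ?xs = "sorted_list_of_set I"
  have rem: "sorted_list_of_set (I - {x}) = remove1 x ?xs"
    using sorted_list_of_set_remove[OF fin] by simp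
  have cI: "card (I - {x}) = card I - 1" using fin x by simp
  have len: "length ?xs = card I" by simp
  have dist: "distinct ?xs" by simp
  show ?thesis
  proof (rule eq_matI)
    fix i j assume i: "i < dim_row (rmat (I - {x}) f)" and j: "j < dim_col (rmat (I - {x}) f)"
    then have i': "i < card I - 1" and j': "j < card I - 1" using cI unfolding rmat_def by auto
    have "(if i < a then i else Suc i) < card I" "(if j < a then j else Suc j) < card I" using i' j' by auto
    then show "mat_delete (rmat I f) a a $$ (i, j) = rmat (I - {x}) f $$ (i, j)"
      unfolding mat_delete_def rmat_def rem using i' j' cI
      remove1_nth[OF dist _ a(2), of i] remove1_nth[OF dist _ a(2), of j] a len
      by simp
  qed (use cI in \<open>auto simp: rmat_def mat_delete_def\<close>)
qed


lemma det_rmat_col: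
  assumes fin: "finite I" and x: "x \<in> I"
    and col: "\<forall>i\<in>I. f i x = (if i = x then c else 0)"
  shows "det (rmat I f) = c * det (rmat (I - {x}) f)"
proof -
  let ?xs = "sorted_list_of_set I"
  have xs: "x \<in> set ?xs" using fin x by simp
  then obtain a where a: "a < length ?xs" "?xs ! a = x" by (meson in_set_conv_nth)
  have len: "length ?xs = card I" by simp
  have dist: "distinct ?xs" by simp
  have "det (rmat I f) = (\<Sum>i<card I. rmat I f $$ (i,a) * cofactor (rmat I f) i a)"
    by (rule laplace_expansion_column[OF rmat_carrier]) (use a len in simp)
  also have "\<dots> = (\<Sum>i<card I. (if i = a then c * cofactor (rmat I f) i a else 0))"
  proof (rule sum.cong[OF refl])
    fix i assume i: "i \<in> {..<card I}"
    have m: "?xs ! i \<in> I" using i len fin nth_mem[of i ?xs] set_sorted_list_of_set[OF fin] by simp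
    have "(?xs ! i = x) = (i = a)" using nth_eq_iff_index_eq[OF dist, of i a] a i len by simp
    then show "rmat I f $$ (i,a) * cofactor (rmat I f) i a = (if i = a then c * cofactor (rmat I f) i a else 0)"
    proof -
      have e: "rmat I f $$ (i,a) = f (?xs ! i) x" using i a len unfolding rmat_def by simp
      show ?thesis unfolding e using col m \<open>(?xs ! i = x) = (i = a)\<close> by simp
    qed
  qed
  also have "\<dots> = c * cofactor (rmat I f) a a" using a len by simp
  also have "\<dots> = c * det (rmat (I - {x}) f)"
  proof -
    have "mat_delete (rmat I f) a a = rmat (I - {x}) f" using rmat_delete[OF fin x, of a f] a len by simp
    moreover have "(-1::real)^(a+a) = 1" by (simp add: mult_2[symmetric] power_mult)
    ultimately show ?thesis unfolding cofactor_def by simp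
  qed
  finally show ?thesis .
qed



lemma det_rmat_cols:
  assumes fin: "finite I" and L: "finite L" "L \<subseteq> I"
    and col: "\<forall>x\<in>L. \<forall>i\<in>I. f i x = (if i = x then c else 0)"
  shows "det (rmat I f) = c ^ card L * det (rmat (I - L) f)"
  using L col
proof (induction L rule: finite_induct)
  case empty then show ?case by simp
next
  case (insert x L)
  have "det (rmat I f) = c ^ card L * det (rmat (I - L) f)" using insert by simp
  also have "det (rmat (I - L) f) = c * det (rmat (I - L - {x}) f)"
    by (rule det_rmat_col) (use insert fin in auto)
  also have "I - L - {x} = I - insert x L" by blast
  finally show ?case using insert by simp
qed

lemma rmat_cong:
  assumes "finite I" "\<And>i j. i \<in> I \<Longrightarrow> j \<in> I \<Longrightarrow> f i j = g i j"
  shows "rmat I f = rmat I g"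
proof -
  have "\<And>i. i < card I \<Longrightarrow> sorted_list_of_set I ! i \<in> I"
    using assms(1) by (metis length_sorted_list_of_set nth_mem set_sorted_list_of_set)
  then show ?thesis unfolding rmat_def using assms(2) by (intro eq_matI) auto
qed

lemma cmat_rmat: "cmat I M = map_mat complex_of_real (rmat I M)"
  unfolding cmat_def rmat_def by (rule eq_matI) auto

lemma poly_char_rmat:
  assumes fin: "finite I"
  shows "poly (char_poly (rmat I M)) x = det (rmat I (\<lambda>i j. (if i = j then x else 0) - M i j))"
  unfolding char_poly_def
proof (rule poly_det_cong[of "rmat I (\<lambda>i j. (if i = j then x else 0) - M i j)" "card I" "char_poly_matrix (rmat I M)"])
  show "rmat I (\<lambda>i j. (if i = j then x else 0) - M i j) \<in> carrier_mat (card I) (card I)" by (rule rmat_carrier)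
  show "char_poly_matrix (rmat I M) \<in> carrier_mat (card I) (card I)"
    using rmat_carrier by (rule char_poly_matrix_closed)
  fix i j assume i: "i < card I" and j: "j < card I"
  let ?xs = "sorted_list_of_set I"
  have eq: "(?xs ! i = ?xs ! j) = (i = j)"
    using nth_eq_iff_index_eq[of ?xs i j] i j by simp
  show "poly (char_poly_matrix (rmat I M) $$ (i, j)) x =
        rmat I (\<lambda>i j. (if i = j then x else 0) - M i j) $$ (i, j)"
    unfolding char_poly_matrix_def using i j eq by (simp add: rmat_def)
qed

lemma det_rmat_cont:
  assumes "\<And>i j. continuous_on UNIV (\<lambda>t. F t i j)"
  shows "continuous_on UNIV (\<lambda>t::real. det (rmat I (F t)))"
proof -
  let ?xs = "sorted_list_of_set I" and ?n = "card I"
  have eq: "det (rmat I (F t)) = (\<Sum>p\<in>{p. p permutes {0..<?n}}.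
      signof p * (\<Prod>i = 0..<?n. F t (?xs ! i) (?xs ! p i)))" for t
    unfolding det_def'[OF rmat_carrier]
  proof (rule sum.cong[OF refl])
    fix p assume "p \<in> {p. p permutes {0..<?n}}"
    then have p: "p permutes {0..<?n}" by simp
    have "(\<Prod>i = 0..<?n. rmat I (F t) $$ (i, p i)) = (\<Prod>i = 0..<?n. F t (?xs ! i) (?xs ! p i))"
    proof (rule prod.cong[OF refl])
      fix i assume i: "i \<in> {0..<?n}"
      then have "p i \<in> {0..<?n}" using p by (simp add: permutes_in_image)
      then show "rmat I (F t) $$ (i, p i) = F t (?xs ! i) (?xs ! p i)"
        using i unfolding rmat_def by simp
    qed
    then show "signof p * (\<Prod>i = 0..<?n. rmat I (F t) $$ (i, p i)) =
        signof p * (\<Prod>i = 0..<?n. F t (?xs ! i) (?xs ! p i))" by simp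
  qed
  show ?thesis unfolding eq
    by (intro continuous_intros assms)
qed



lemma cont_if_id [continuous_intros]: "continuous_on UNIV (\<lambda>x::real. if P then x else 0)"
  by (cases P) (simp_all add: continuous_on_id)

theorem mainTheorem12:
  fixes n r :: nat and s S :: "nat \<Rightarrow> nat \<Rightarrow> real"
    and \<kappa> E\<kappa> :: "nat set" and J :: "nat \<Rightarrow> nat"
  assumes "\<forall>j m. s j m \<ge> 0"
    and "child_selection n r s \<kappa> E\<kappa> J"
    and "hurwitz_stable \<kappa> (cs_matrix S J)"
    and "\<exists>K \<subseteq> \<kappa>. unstable_positive_feedback K (cs_matrix S J)"
  shows "D_Hopf \<kappa> (cs_matrix S J)"
proof -
  define A where "A = cs_matrix S J"
  have fin: "finite \<kappa>" using assms(2) unfolding child_selection_def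
    using finite_nat_iff_bounded by blast
  have stab: "hurwitz_stable \<kappa> A" using assms(3) A_def by simp
  obtain K where K: "K \<subseteq> \<kappa>" "unstable_positive_feedback K A" using assms(4) A_def by blast
  have finK: "finite K" using K(1) fin finite_subset by blast
  have "hurwitz_unstable K A" using K(2) unfolding unstable_positive_feedback_def unstable_core_def by simp
  then obtain z where "eigenvalue (cmat K A) z" unfolding hurwitz_unstable_def by blast
  then have kpos: "card K > 0"
    using eigenvalue_imp_nonzero_dim[of "cmat K A" "card K"] unfolding cmat_def by auto
  define k where "k = card K"
  have sg: "sgn (det (rmat K A)) = (-1) ^ (k - 1)"
    using K(2) unfolding unstable_positive_feedback_def k_def by simp
  have dK: "(-1) ^ k * det (rmat K A) < 0"
  proof (cases "even k")
    case True
    then have "odd (k - 1)" using kpos k_def by simp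
    then have "sgn (det (rmat K A)) = -1" using sg by simp
    then have "det (rmat K A) < 0" by (simp add: sgn_if split: if_splits)
    then show ?thesis using True by simp
  next
    case False
    then have "even (k - 1)" using kpos k_def by simp
    then have "sgn (det (rmat K A)) = 1" using sg by simp
    then have "det (rmat K A) > 0" by (simp add: sgn_if split: if_splits)
    then show ?thesis using False by simp
  qed
  define q where "q = (\<lambda>x. det (rmat K (\<lambda>i j. (if i = j then x else 0) - A i j)))"
  have "rmat K (\<lambda>i j. (if i = j then 0 else 0) - A i j) = (-1) \<cdot>\<^sub>m rmat K A"
    unfolding rmat_def by (rule eq_matI) auto
  then have q0: "q 0 < 0" unfolding q_def using dK k_def
    by (simp add: rmat_def)
  have qc: "continuous_on UNIV q" unfolding q_def
    by (rule det_rmat_cont) (intro continuous_intros)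
  have "(q \<longlongrightarrow> q 0) (at_right 0)"
    using qc by (meson continuous_on_def filterlim_at_split iso_tuple_UNIV_I)
  then have "\<forall>\<^sub>F x in at_right 0. q x < 0" using q0 by (simp add: order_tendstoD(2))
  then have "\<forall>\<^sub>F x in at_right 0. q x < 0 \<and> 0 < x" using eventually_conj[OF _ eventually_at_right_less[of "0::real"]]
    by blast
  then obtain x1 :: real where x1: "q x1 < 0" "0 < x1"
    using eventually_happens trivial_limit_at_right_real by blast
  define L where "L = \<kappa> - K"
  have finL: "finite L" using fin L_def by simp
  define a where "a = (\<lambda>j. if j \<in> K then 1 else (0::real))"
  define b where "b = (\<lambda>j. if j \<in> K then 0 else (1::real))"
  define g where "g = (\<lambda>e. det (rmat \<kappa> (\<lambda>i j. (if i = j then x1 else 0) - A i j * (a j + b j * e))))"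
  have "g 0 = x1 ^ card L * det (rmat (\<kappa> - L) (\<lambda>i j. (if i = j then x1 else 0) - A i j * (a j + b j * 0)))"
    unfolding g_def
    by (rule det_rmat_cols[OF fin finL]) (auto simp: L_def a_def b_def)
  also have "\<kappa> - L = K" using L_def K(1) by blast
  also have "rmat K (\<lambda>i j. (if i = j then x1 else 0) - A i j * (a j + b j * 0)) =
      rmat K (\<lambda>i j. (if i = j then x1 else 0) - A i j)"
    by (rule rmat_cong[OF finK]) (simp add: a_def)
  finally have g0: "g 0 < 0" using x1 unfolding q_def
    by (simp add: mult_pos_neg)
  have gc: "continuous_on UNIV g" unfolding g_def
    by (rule det_rmat_cont) (intro continuous_intros)
  have "(g \<longlongrightarrow> g 0) (at_right 0)"
    using gc by (meson continuous_on_def filterlim_at_split iso_tuple_UNIV_I)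
  then have "\<forall>\<^sub>F x in at_right 0. g x < 0" using g0 by (simp add: order_tendstoD(2))
  then have "\<forall>\<^sub>F x in at_right 0. g x < 0 \<and> 0 < x" using eventually_conj[OF _ eventually_at_right_less[of "0::real"]]
    by blast
  then obtain e :: real where e: "g e < 0" "0 < e"
    using eventually_happens trivial_limit_at_right_real by blast
  define D2 where "D2 = (\<lambda>j. a j + b j * e)"
  have D2pos: "\<forall>i\<in>\<kappa>. D2 i > 0" using e unfolding D2_def a_def b_def by auto
  define M2 where "M2 = (\<lambda>i j. A i j * D2 j)"
  define pr where "pr = char_poly (rmat \<kappa> M2)"
  have pr_x1: "poly pr x1 < 0"
    unfolding pr_def poly_char_rmat[OF fin] using e(1) unfolding g_def M2_def D2_def by simp
  have dm: "degree pr = card \<kappa> \<and> coeff pr (card \<kappa>) = 1"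
    unfolding pr_def by (rule degree_monic_char_poly[OF rmat_carrier])
  then have lc: "lead_coeff pr = 1" by simp
  obtain N where N: "\<forall>x\<ge>N. poly pr x \<ge> 1" using poly_pinfty_gt_lc[of pr] lc by auto
  define B where "B = max N (x1 + 1)"
  have "B \<ge> N" using B_def by simp
  then have "poly pr B \<ge> 1" using N by blast
  then have "poly pr B > 0" by simp
  then obtain y where y: "x1 < y" "poly pr y = 0"
    using poly_IVT_pos[of x1 B pr] pr_x1 B_def by (metis less_add_one max.strict_coboundedI2)
  define p2 where "p2 = char_poly (cmat \<kappa> M2)"
  have p2eq: "p2 = map_poly complex_of_real pr"
    unfolding p2_def pr_def cmat_rmat by (rule of_real_hom.char_poly_hom[OF rmat_carrier])
  have root: "poly p2 (complex_of_real y) = 0"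
    unfolding p2eq of_real_hom.poly_map_poly using y by simp
  have p2nz: "p2 \<noteq> 0"
  proof
    assume "p2 = 0"
    then have "pr = 0" unfolding p2eq by simp
    then show False using dm by simp
  qed
  have fin2: "finite {z. poly p2 z = 0 \<and> Re z > 0}"
    using poly_roots_finite[OF p2nz] by (rule finite_subset[rotated]) auto
  have ymem: "complex_of_real y \<in> {z. poly p2 z = 0 \<and> Re z > 0}" using root y x1 by simp
  have "order (complex_of_real y) p2 \<noteq> 0" using root p2nz order_root by blast
  have pos2: "(\<Sum>z\<in>{z. poly p2 z = 0 \<and> Re z > 0}. order z p2) \<noteq> 0"
  proof
    assume "(\<Sum>z\<in>{z. poly p2 z = 0 \<and> Re z > 0}. order z p2) = 0"
    then have "\<forall>a\<in>{z. poly p2 z = 0 \<and> Re z > 0}. order a p2 = 0"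
      using sum_eq_0_iff[OF fin2, of "\<lambda>z. order z p2"] by simp
    then have "order (complex_of_real y) p2 = 0" using ymem by blast
    then show False using \<open>order (complex_of_real y) p2 \<noteq> 0\<close> by simp
  qed
  define p1 where "p1 = char_poly (cmat \<kappa> A)"
  have eig1: "poly p1 z = 0 \<Longrightarrow> Re z < 0" for z
  proof -
    assume "poly p1 z = 0"
    then have "eigenvalue (cmat \<kappa> A) z" unfolding p1_def
      using eigenvalue_root_char_poly[of "cmat \<kappa> A" "card \<kappa>"] unfolding cmat_def by simp
    then show "Re z < 0" using stab unfolding hurwitz_stable_def by blast
  qed
  then have zero1: "(\<Sum>z\<in>{z. poly p1 z = 0 \<and> Re z > 0}. order z p1) = 0"
    by (metis (mono_tags, lifting) empty_Collect_eq order_less_asym sum.empty)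
  have ine: "inertia \<kappa> (\<lambda>i j. A i j * 1) \<noteq> inertia \<kappa> (\<lambda>i j. A i j * D2 j)"
  proof
    assume "inertia \<kappa> (\<lambda>i j. A i j * 1) = inertia \<kappa> (\<lambda>i j. A i j * D2 j)"
    then have "fst (snd (inertia \<kappa> A)) = fst (snd (inertia \<kappa> M2))" unfolding M2_def by simp
    then show False using zero1 pos2 unfolding inertia_def Let_def p1_def p2_def by simp
  qed
  have detne: "det (rmat \<kappa> A) \<noteq> 0"
  proof
    assume d0: "det (rmat \<kappa> A) = 0"
    have "rmat \<kappa> (\<lambda>i j. (if i = j then 0 else 0) - A i j) = (-1) \<cdot>\<^sub>m rmat \<kappa> A"
      unfolding rmat_def by (rule eq_matI) auto
    then have "poly (char_poly (rmat \<kappa> A)) 0 = 0"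
      unfolding poly_char_rmat[OF fin] using d0 by (simp add: rmat_def)
    then have "poly p1 (complex_of_real 0) = 0"
      unfolding p1_def cmat_rmat of_real_hom.char_poly_hom[OF rmat_carrier] of_real_hom.poly_map_poly
      by simp
    then show False using eig1 by fastforce
  qed
  show ?thesis unfolding A_def[symmetric] D_Hopf_def
    using detne ine D2pos by (intro exI[of _ \<kappa>] conjI exI[of _ "\<lambda>_. 1"] exI[of _ D2]) auto
qed


end
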